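(* Let $y(t)$ solve $\dot y_k=v_k(Q(y))$, $k\in\mathcal{N}$, let $x(t)=Q(y(t))$, and let $p_k,p_k'\in\mathcal{X}_k$ with $p_k\preccurlyeq p_k'$. Then either $p_k$ becomes extinct along $x(t)$ (i.e. $\min\{x_{k\alpha}(t):\alpha\in\operatorname{supp}(p_k)\}\to0$), or every $\alpha_{-k}\in\mathcal{A}_{-k}\equiv\prod_{\ell\neq k}\mathcal{A}_\ell$ such that $u_k(p_k;\alpha_{-k})<u_k(p_k';\alpha_{-k})$ becomes extinct along $x(t)$ (i.e. $\prod_{\ell\ne k}x_{\ell,\alpha_\ell}(t)\to0$); the two alternatives are not mutually exclusive.
   Context: Setting: finite game with players $\mathcal{N}$, action sets $\mathcal{A}_k$, mixed strategies $\mathcal{X}_k=\Delta(\mathcal{A}_k)$, multilinear expected payoffs $u_k$, payoff vectors $v_k(x)=(u_k(\alpha;x_{-k}))_{\alpha\in\mathcal{A}_k}$. Each player has a penalty function $h_k$ on $\mathcal{X}_k$ (continuous, $C^\infty$ on relative interiors of faces, strongly convex: $h(tx_1+(1-t)x_2)\le th(x_1)+(1-t)h(x_2)-\tfrac12Kt(1-t)\|x_1-x_2\|^2$, $K>0$), with choice map $Q_k(y_k)=\arg\max_{x_k\in\mathcal{X}_k}\{\langle y_k,x_k\rangle-h_k(x_k)\}$; $Q=(Q_k)_k$. $p_k\preccurlyeq p_k'$ (weak domination) means $u_k(p_k;x_{-k})\le u_k(p_k';x_{-k})$ for all $x_{-k}\in\prod_{\ell\ne k}\mathcal{X}_\ell$,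 with strict inequality for some but not all $x_{-k}$. *)

theory Defs
  imports "HOL-Analysis.Analysis"
begin

definition finite_game :: "'n set \<Rightarrow> ('n \<Rightarrow> 'a set) \<Rightarrow> bool" where
  "finite_game N A \<longleftrightarrow> finite N \<and> (\<forall>k\<in>N. finite (A k) \<and> A k \<noteq> {})"

definition mixed :: "('n \<Rightarrow> 'a set) \<Rightarrow> 'n \<Rightarrow> ('a \<Rightarrow> real) set" where
  "mixed A k = {x. (\<forall>a. a \<notin> A k \<longrightarrow> x a = 0) \<and> (\<forall>a\<in>A k. 0 \<le> x a) \<and> sum x (A k) = 1}"

definition pure :: "'a \<Rightarrow> 'a \<Rightarrow> real" where
  "pure \<alpha> = (\<lambda>b. if b = \<alpha> then 1 else 0)"

definition exp_payoff ::
  "'n set \<Rightarrow> ('n \<Rightarrow> 'a set) \<Rightarrow> ('n \<Rightarrow> ('n \<Rightarrow> 'a) \<Rightarrow> real) \<Rightarrow> 'n \<Rightarrow> ('n \<Rightarrow> 'a \<Rightarrow> real) \<Rightarrow> real" where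
  "exp_payoff N A U k x = (\<Sum>\<alpha>\<in>PiE N A. (\<Prod>l\<in>N. x l (\<alpha> l)) * U k \<alpha>)"

definition payoff_vec ::
  "'n set \<Rightarrow> ('n \<Rightarrow> 'a set) \<Rightarrow> ('n \<Rightarrow> ('n \<Rightarrow> 'a) \<Rightarrow> real) \<Rightarrow> 'n \<Rightarrow> ('n \<Rightarrow> 'a \<Rightarrow> real) \<Rightarrow> 'a \<Rightarrow> real" where
  "payoff_vec N A U k x = (\<lambda>\<alpha>. exp_payoff N A U k (x(k := pure \<alpha>)))"

definition pairing :: "('n \<Rightarrow> 'a set) \<Rightarrow> 'n \<Rightarrow> ('a \<Rightarrow> real) \<Rightarrow> ('a \<Rightarrow> real) \<Rightarrow> real" where
  "pairing A k y x = (\<Sum>a\<in>A k. y a * x a)"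

definition choice ::
  "('n \<Rightarrow> 'a set) \<Rightarrow> ('n \<Rightarrow> ('a \<Rightarrow> real) \<Rightarrow> real) \<Rightarrow> 'n \<Rightarrow> ('a \<Rightarrow> real) \<Rightarrow> ('a \<Rightarrow> real)" where
  "choice A h k y = (THE x. x \<in> mixed A k \<and>
     (\<forall>x'\<in>mixed A k. pairing A k y x' - h k x' \<le> pairing A k y x - h k x))"

text \<open>Iterated directional derivatives (outermost direction first).\<close>
fun iter_dd :: "(('a \<Rightarrow> real) \<Rightarrow> real) \<Rightarrow> ('a \<Rightarrow> real) list \<Rightarrow> ('a \<Rightarrow> real) \<Rightarrow> real" where
  "iter_dd f [] = f"
| "iter_dd f (d # ds) = (\<lambda>z. deriv (\<lambda>s. iter_dd f ds (\<lambda>a. z a + s * d a)) 0)"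

definition smooth_along :: "('a \<Rightarrow> real) set \<Rightarrow> ('a \<Rightarrow> real) set \<Rightarrow> (('a \<Rightarrow> real) \<Rightarrow> real) \<Rightarrow> bool" where
  "smooth_along D V f \<longleftrightarrow>
     (\<forall>ds. set ds \<subseteq> V \<longrightarrow> continuous_on D (iter_dd f ds) \<and>
        (\<forall>d\<in>V. \<forall>z\<in>D. (\<lambda>s. iter_dd f ds (\<lambda>a. z a + s * d a)) differentiable (at 0)))"

definition face_relint :: "('n \<Rightarrow> 'a set) \<Rightarrow> 'n \<Rightarrow> 'a set \<Rightarrow> ('a \<Rightarrow> real) set" where
  "face_relint A k S = {x \<in> mixed A k. (\<forall>a\<in>S. 0 < x a) \<and> (\<forall>a. a \<notin> S \<longrightarrow> x a = 0)}"

definition face_dirs :: "'a set \<Rightarrow> ('a \<Rightarrow> real) set" where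
  "face_dirs S = {d. (\<forall>a. a \<notin> S \<longrightarrow> d a = 0) \<and> sum d S = 0}"

definition strongly_convex_mixed :: "('n \<Rightarrow> 'a set) \<Rightarrow> 'n \<Rightarrow> real \<Rightarrow> (('a \<Rightarrow> real) \<Rightarrow> real) \<Rightarrow> bool" where
  "strongly_convex_mixed A k K f \<longleftrightarrow>
     (\<forall>x1\<in>mixed A k. \<forall>x2\<in>mixed A k. \<forall>t\<in>{0..1}.
        f (\<lambda>a. t * x1 a + (1 - t) * x2 a)
          \<le> t * f x1 + (1 - t) * f x2 - 1/2 * K * t * (1 - t) * (\<Sum>a\<in>A k. (x1 a - x2 a)\<^sup>2))"

definition penalty :: "('n \<Rightarrow> 'a set) \<Rightarrow> 'n \<Rightarrow> (('a \<Rightarrow> real) \<Rightarrow> real) \<Rightarrow> bool" where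
  "penalty A k f \<longleftrightarrow> continuous_on (mixed A k) f
     \<and> (\<forall>S. S \<noteq> {} \<and> S \<subseteq> A k \<longrightarrow> smooth_along (face_relint A k S) (face_dirs S) f)
     \<and> (\<exists>K>0. strongly_convex_mixed A k K f)"

definition weakly_dominated ::
  "'n set \<Rightarrow> ('n \<Rightarrow> 'a set) \<Rightarrow> ('n \<Rightarrow> ('n \<Rightarrow> 'a) \<Rightarrow> real) \<Rightarrow> 'n \<Rightarrow> ('a \<Rightarrow> real) \<Rightarrow> ('a \<Rightarrow> real) \<Rightarrow> bool" where
  "weakly_dominated N A U k p p' \<longleftrightarrow>
     (\<forall>x. (\<forall>l\<in>N - {k}. x l \<in> mixed A l) \<longrightarrow>
        exp_payoff N A U k (x(k := p)) \<le> exp_payoff N A U k (x(k := p')))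
   \<and> (\<exists>x. (\<forall>l\<in>N - {k}. x l \<in> mixed A l) \<and>
        exp_payoff N A U k (x(k := p)) < exp_payoff N A U k (x(k := p')))
   \<and> (\<exists>x. (\<forall>l\<in>N - {k}. x l \<in> mixed A l) \<and>
        \<not> exp_payoff N A U k (x(k := p)) < exp_payoff N A U k (x(k := p')))"

end

theory Submission imports Defs begin

lemma cont_sum_coords: "continuous_on S (\<lambda>x::'a\<Rightarrow>real. sum x B)"
  by (intro continuous_on_sum continuous_on_subset[OF continuous_on_product_coordinates]) auto

lemma compact_mixed:
  assumes "finite (A k)"
  shows "compact (mixed A k)"
proof -
  define S where "S = (\<lambda>a. if a \<in> A k then {0..1::real} else {0})"
  have c1: "compact (PiE UNIV S)"
  proof -
    have "compactin (product_topology (\<lambda>_. euclidean) UNIV) (PiE UNIV S)"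
      unfolding compactin_PiE by (auto simp: S_def)
    then show ?thesis by (simp add: euclidean_product_topology)
  qed
  have c2: "closed {x::'a\<Rightarrow>real. sum x (A k) = 1}"
    by (intro closed_Collect_eq cont_sum_coords continuous_on_const)
  have eq: "mixed A k = PiE UNIV S \<inter> {x. sum x (A k) = 1}"
  proof (rule set_eqI, rule iffI)
    fix x assume x: "x \<in> mixed A k"
    have "x a \<le> 1" if "a \<in> A k" for a
    proof -
      have "x a \<le> sum x (A k)"
        by (rule member_le_sum) (use x that assms in \<open>auto simp: mixed_def\<close>)
      then show ?thesis using x by (simp add: mixed_def)
    qed
    then show "x \<in> PiE UNIV S \<inter> {x. sum x (A k) = 1}"
      using x by (auto simp: mixed_def S_def PiE_iff)
  next
    fix x assume "x \<in> PiE UNIV S \<inter> {x. sum x (A k) = 1}"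
    then show "x \<in> mixed A k"
      by (auto simp: mixed_def S_def PiE_iff split: if_splits)
  qed
  show ?thesis unfolding eq using c1 c2 by blast
qed

lemma pure_mixed: "finite (A k) \<Longrightarrow> a \<in> A k \<Longrightarrow> pure a \<in> mixed A k"
  by (auto simp: mixed_def pure_def sum.delta)

lemma mixed_bounds:
  assumes "finite (A k)" "x \<in> mixed A k"
  shows "0 \<le> x a" "x a \<le> 1"
proof -
  show "0 \<le> x a" using assms by (cases "a \<in> A k") (auto simp: mixed_def)
  show "x a \<le> 1"
  proof (cases "a \<in> A k")
    case True
    have "x a \<le> sum x (A k)"
      by (rule member_le_sum) (use assms True in \<open>auto simp: mixed_def\<close>)
    then show ?thesis using assms by (simp add: mixed_def)
  qed (use assms in \<open>auto simp: mixed_def\<close>)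
qed

lemma pairing_mid:
  "pairing A k y (\<lambda>a. 1/2 * z a + (1 - 1/2) * x a) = 1/2 * pairing A k y z + 1/2 * pairing A k y x"
  by (simp add: pairing_def sum_distrib_left sum.distrib algebra_simps)

lemma mid_mixed:
  assumes "z \<in> mixed A k" "x \<in> mixed A k"
  shows "(\<lambda>a. 1/2 * z a + (1 - 1/2) * x a) \<in> mixed A k"
  using assms by (auto simp: mixed_def sum.distrib sum_divide_distrib[symmetric])

lemma sc_gap:
  assumes sc: "strongly_convex_mixed A k K f"
    and x: "x \<in> mixed A k" and z: "z \<in> mixed A k"
    and opt: "\<forall>x'\<in>mixed A k. pairing A k y x' - f x' \<le> pairing A k y x - f x"
  shows "K/4 * (\<Sum>a\<in>A k. (z a - x a)\<^sup>2) \<le> (pairing A k y x - f x) - (pairing A k y z - f z)"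
proof -
  define w where "w = (\<lambda>a. 1/2 * z a + (1 - 1/2) * x a)"
  have w: "w \<in> mixed A k" unfolding w_def by (rule mid_mixed[OF z x])
  have "f w \<le> 1/2 * f z + (1 - 1/2) * f x - 1/2 * K * (1/2) * (1 - 1/2) * (\<Sum>a\<in>A k. (z a - x a)\<^sup>2)"
  proof -
    have "(1/2::real) \<in> {0..1}" by simp
    then show ?thesis using sc z x unfolding strongly_convex_mixed_def w_def by blast
  qed
  moreover have "pairing A k y w - f w \<le> pairing A k y x - f x" using opt w by blast
  moreover have "pairing A k y w = 1/2 * pairing A k y z + 1/2 * pairing A k y x"
    unfolding w_def by (rule pairing_mid)
  ultimately show ?thesis by (simp add: algebra_simps)
qed

definition ismax where
  "ismax A k f y x \<longleftrightarrow> x \<in> mixed A k \<and> (\<forall>x'\<in>mixed A k. pairing A k y x' - f x' \<le> pairing A k y x - f x)"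

lemma cont_pairing: "continuous_on S (\<lambda>x. pairing A k y x)"
  unfolding pairing_def
  by (intro continuous_on_sum continuous_on_mult continuous_on_const
      continuous_on_subset[OF continuous_on_product_coordinates]) auto

lemma ismax_unique:
  assumes sc: "strongly_convex_mixed A k K f" and K: "K > 0" and fin: "finite (A k)"
    and m1: "ismax A k f y x1" and m2: "ismax A k f y x2"
  shows "x1 = x2"
proof -
  have g: "K/4 * (\<Sum>a\<in>A k. (x2 a - x1 a)\<^sup>2) \<le> (pairing A k y x1 - f x1) - (pairing A k y x2 - f x2)"
    using sc_gap[OF sc] m1 m2 unfolding ismax_def by blast
  have "(pairing A k y x1 - f x1) \<le> (pairing A k y x2 - f x2)" using m1 m2 unfolding ismax_def by blast
  with g have "K/4 * (\<Sum>a\<in>A k. (x2 a - x1 a)\<^sup>2) \<le> 0" by linarith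
  with K have "(\<Sum>a\<in>A k. (x2 a - x1 a)\<^sup>2) \<le> 0" by (simp add: mult_le_0_iff)
  moreover have "(\<Sum>a\<in>A k. (x2 a - x1 a)\<^sup>2) \<ge> 0" by (simp add: sum_nonneg)
  ultimately have "(\<Sum>a\<in>A k. (x2 a - x1 a)\<^sup>2) = 0" by simp
  then have "\<forall>a\<in>A k. (x2 a - x1 a)\<^sup>2 = 0" using fin by (simp add: sum_nonneg_eq_0_iff)
  then have e: "\<forall>a\<in>A k. x1 a = x2 a" by simp
  show ?thesis
  proof
    fix a show "x1 a = x2 a"
      using e m1 m2 unfolding ismax_def mixed_def by (cases "a \<in> A k") auto
  qed
qed

lemma choice_spec:
  assumes fin: "finite (A k)" "A k \<noteq> {}" and pen: "penalty A k (h k)"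
  shows "ismax A k (h k) y (choice A h k y)"
proof -
  obtain K where K: "K > 0" "strongly_convex_mixed A k K (h k)" using pen unfolding penalty_def by blast
  have cont: "continuous_on (mixed A k) (h k)" using pen unfolding penalty_def by blast
  obtain a where a: "a \<in> A k" using fin(2) by blast
  have ne: "mixed A k \<noteq> {}" using pure_mixed[of A k, OF fin(1) a] by blast
  have co: "continuous_on (mixed A k) (\<lambda>x. pairing A k y x - h k x)"
    by (intro continuous_on_diff cont_pairing cont)
  obtain x where x1: "x \<in> mixed A k" and x2: "\<forall>x'\<in>mixed A k. pairing A k y x' - h k x' \<le> pairing A k y x - h k x"
    using continuous_attains_sup[OF compact_mixed[of A k, OF fin(1)] ne co] by blast
  have x: "ismax A k (h k) y x" unfolding ismax_def using x1 x2 by blast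
  have uq: "\<And>x'. ismax A k (h k) y x' \<Longrightarrow> x' = x"
    using ismax_unique[OF K(2) K(1) fin(1)] x by blast
  have "ismax A k (h k) y (THE x. ismax A k (h k) y x)"
    by (rule theI[where P="\<lambda>z. ismax A k (h k) y z", OF x uq])
  then show ?thesis unfolding choice_def ismax_def[symmetric] .
qed

lemma choice_holder:
  assumes sc: "strongly_convex_mixed A k K f" and K: "K > 0" and fin: "finite (A k)"
    and m1: "ismax A k f y x" and m2: "ismax A k f y' x'"
    and d: "\<forall>a\<in>A k. \<bar>y a - y' a\<bar> \<le> d" and a: "a \<in> A k"
  shows "(x a - x' a)\<^sup>2 \<le> 4 * d / K"
proof -
  let ?S = "\<Sum>a\<in>A k. (x a - x' a)\<^sup>2"
  have g1: "K/4 * (\<Sum>a\<in>A k. (x' a - x a)\<^sup>2) \<le> (pairing A k y x - f x) - (pairing A k y x' - f x')"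
    using sc_gap[OF sc] m1 m2 unfolding ismax_def by blast
  have g2: "K/4 * ?S \<le> (pairing A k y' x' - f x') - (pairing A k y' x - f x)"
    using sc_gap[OF sc] m1 m2 unfolding ismax_def by blast
  have sw: "(\<Sum>a\<in>A k. (x' a - x a)\<^sup>2) = ?S" by (simp add: power2_commute)
  have eq: "pairing A k y x - pairing A k y x' + pairing A k y' x' - pairing A k y' x
      = (\<Sum>a\<in>A k. (y a - y' a) * (x a - x' a))"
    by (simp add: pairing_def sum_subtractf[symmetric] sum.distrib[symmetric] algebra_simps)
  have x0: "\<forall>a\<in>A k. 0 \<le> x a" "\<forall>a\<in>A k. 0 \<le> x' a" using m1 m2 by (auto simp: ismax_def mixed_def)
  have "(\<Sum>a\<in>A k. (y a - y' a) * (x a - x' a)) \<le> (\<Sum>a\<in>A k. d * (x a + x' a))"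
  proof (rule sum_mono)
    fix b assume b: "b \<in> A k"
    have "(y b - y' b) * (x b - x' b) \<le> \<bar>y b - y' b\<bar> * \<bar>x b - x' b\<bar>"
      by (metis abs_ge_self abs_mult)
    also have "\<dots> \<le> d * (x b + x' b)"
      by (rule mult_mono) (use d b x0 in \<open>auto simp: abs_le_iff\<close>)
    finally show "(y b - y' b) * (x b - x' b) \<le> d * (x b + x' b)" .
  qed
  also have "\<dots> = 2 * d" using m1 m2 by (simp add: ismax_def mixed_def sum.distrib sum_distrib_left[symmetric])
  finally have "K/2 * ?S \<le> 2 * d" using g1 g2 sw eq by (simp add: field_simps)
  then have S: "?S \<le> 4 * d / K" using K by (simp add: field_simps)
  have "(x a - x' a)\<^sup>2 \<le> ?S" by (rule member_le_sum) (use a fin in auto)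
  with S show ?thesis by linarith
qed

lemma exp_payoff_decomp:
  assumes k: "k \<in> N" and finN: "finite N"
  shows "exp_payoff N A U k (z(k:=q)) =
    (\<Sum>\<beta>\<in>PiE (N-{k}) A. (\<Prod>l\<in>N-{k}. z l (\<beta> l)) * (\<Sum>a\<in>A k. q a * U k (\<beta>(k:=a))))"
proof -
  have NN: "N = insert k (N - {k})" using k by blast
  have PE: "PiE N A = (\<lambda>(y, g). g(k := y)) ` (A k \<times> PiE (N-{k}) A)"
    by (subst NN, rule PiE_insert_eq)
  have inj: "inj_on (\<lambda>(y, g). g(k := y)) (A k \<times> PiE (N-{k}) A)"
    by (rule inj_combinator) simp
  have prodeq: "(\<Prod>l\<in>N. (z(k:=q)) l ((g(k:=a)) l)) = q a * (\<Prod>l\<in>N-{k}. z l (g l))" for g a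
  proof -
    have "(\<Prod>l\<in>N. (z(k:=q)) l ((g(k:=a)) l)) = (z(k:=q)) k ((g(k:=a)) k) * (\<Prod>l\<in>N-{k}. (z(k:=q)) l ((g(k:=a)) l))"
      using k finN by (simp add: prod.remove)
    also have "(\<Prod>l\<in>N-{k}. (z(k:=q)) l ((g(k:=a)) l)) = (\<Prod>l\<in>N-{k}. z l (g l))"
      by (rule prod.cong) auto
    finally show ?thesis by simp
  qed
  have "exp_payoff N A U k (z(k:=q)) = (\<Sum>\<gamma>\<in>PiE N A. (\<Prod>l\<in>N. (z(k:=q)) l (\<gamma> l)) * U k \<gamma>)"
    by (simp add: exp_payoff_def)
  also have "\<dots> = (\<Sum>(a, g)\<in>A k \<times> PiE (N-{k}) A. (\<Prod>l\<in>N. (z(k:=q)) l ((g(k:=a)) l)) * U k (g(k:=a)))"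
    unfolding PE by (subst sum.reindex[OF inj]) (simp add: case_prod_beta)
  also have "\<dots> = (\<Sum>(a, g)\<in>A k \<times> PiE (N-{k}) A. q a * (\<Prod>l\<in>N-{k}. z l (g l)) * U k (g(k:=a)))"
    by (rule sum.cong) (auto simp del: fun_upd_apply simp: prodeq)
  also have "\<dots> = (\<Sum>a\<in>A k. \<Sum>g\<in>PiE (N-{k}) A. q a * (\<Prod>l\<in>N-{k}. z l (g l)) * U k (g(k:=a)))"
    by (simp add: sum.cartesian_product)
  also have "\<dots> = (\<Sum>g\<in>PiE (N-{k}) A. \<Sum>a\<in>A k. q a * (\<Prod>l\<in>N-{k}. z l (g l)) * U k (g(k:=a)))"
    by (rule sum.swap)
  also have "\<dots> = (\<Sum>\<beta>\<in>PiE (N-{k}) A. (\<Prod>l\<in>N-{k}. z l (\<beta> l)) * (\<Sum>a\<in>A k. q a * U k (\<beta>(k:=a))))"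
    by (simp add: sum_distrib_left sum_distrib_right mult_ac)
  finally show ?thesis .
qed

lemma exp_payoff_bound:
  assumes game: "finite_game N A" and z: "\<forall>l\<in>N. z l \<in> mixed A l"
  shows "\<bar>exp_payoff N A U j z\<bar> \<le> (\<Sum>\<gamma>\<in>PiE N A. \<bar>U j \<gamma>\<bar>)"
proof -
  have "\<bar>exp_payoff N A U j z\<bar> \<le> (\<Sum>\<gamma>\<in>PiE N A. \<bar>(\<Prod>l\<in>N. z l (\<gamma> l)) * U j \<gamma>\<bar>)"
    unfolding exp_payoff_def by (rule sum_abs)
  also have "\<dots> \<le> (\<Sum>\<gamma>\<in>PiE N A. \<bar>U j \<gamma>\<bar>)"
  proof (rule sum_mono)
    fix \<gamma> assume g: "\<gamma> \<in> PiE N A"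
    have "\<bar>\<Prod>l\<in>N. z l (\<gamma> l)\<bar> \<le> 1"
      unfolding abs_prod
    proof (rule prod_le_1)
      fix l assume l: "l \<in> N"
      have "finite (A l)" using game l by (simp add: finite_game_def)
      then show "0 \<le> \<bar>z l (\<gamma> l)\<bar> \<and> \<bar>z l (\<gamma> l)\<bar> \<le> 1"
        using mixed_bounds[of A l "z l" "\<gamma> l"] z l by auto
    qed
    then show "\<bar>(\<Prod>l\<in>N. z l (\<gamma> l)) * U j \<gamma>\<bar> \<le> \<bar>U j \<gamma>\<bar>"
      by (simp add: abs_mult mult_left_le_one_le)
  qed
  finally show ?thesis .
qed

lemma sc_mono:
  assumes "strongly_convex_mixed A k K f" "K' \<le> K"
  shows "strongly_convex_mixed A k K' f"
  unfolding strongly_convex_mixed_def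
proof (intro ballI)
  fix x1 x2 t assume x: "x1 \<in> mixed A k" "x2 \<in> mixed A k" "t \<in> {0..1::real}"
  have "0 \<le> t * (1 - t) * (\<Sum>a\<in>A k. (x1 a - x2 a)\<^sup>2)"
    using x(3) by (intro mult_nonneg_nonneg sum_nonneg) auto
  then have KK: "1/2 * K' * t * (1 - t) * (\<Sum>a\<in>A k. (x1 a - x2 a)\<^sup>2) \<le> 1/2 * K * t * (1 - t) * (\<Sum>a\<in>A k. (x1 a - x2 a)\<^sup>2)"
  proof -
    have "(1/2 * K') * (t * (1 - t) * (\<Sum>a\<in>A k. (x1 a - x2 a)\<^sup>2)) \<le> (1/2 * K) * (t * (1 - t) * (\<Sum>a\<in>A k. (x1 a - x2 a)\<^sup>2))"
      by (rule mult_right_mono) (use assms(2) \<open>0 \<le> t * (1 - t) * _\<close> in auto)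
    then show ?thesis by (simp add: mult.assoc)
  qed
  then show "f (\<lambda>a. t * x1 a + (1 - t) * x2 a) \<le> t * f x1 + (1 - t) * f x2 - 1/2 * K' * t * (1 - t) * (\<Sum>a\<in>A k. (x1 a - x2 a)\<^sup>2)"
  proof -
    have "f (\<lambda>a. t * x1 a + (1 - t) * x2 a) \<le> t * f x1 + (1 - t) * f x2 - 1/2 * K * t * (1 - t) * (\<Sum>a\<in>A k. (x1 a - x2 a)\<^sup>2)"
      using assms(1) x unfolding strongly_convex_mixed_def by blast
    then show ?thesis using KK by linarith
  qed
qed

lemma prod_pure_PiE:
  assumes "\<beta> \<in> PiE S A" "\<beta>0 \<in> PiE S A" "finite S"
  shows "(\<Prod>l\<in>S. pure (\<beta>0 l) (\<beta> l)) = (if \<beta> = \<beta>0 then 1 else 0)"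
proof (cases "\<beta> = \<beta>0")
  case True then show ?thesis by (simp add: pure_def)
next
  case False
  then obtain l where l: "l \<in> S" "\<beta> l \<noteq> \<beta>0 l" using assms by (metis PiE_ext)
  have "pure (\<beta>0 l) (\<beta> l) = 0" using l by (simp add: pure_def)
  then show ?thesis using l assms(3) False by (metis prod_zero_iff)
qed

theorem proposition4p3:
  fixes N :: "'n set" and A :: "'n \<Rightarrow> 'a set"
    and U :: "'n \<Rightarrow> ('n \<Rightarrow> 'a) \<Rightarrow> real"
    and h :: "'n \<Rightarrow> ('a \<Rightarrow> real) \<Rightarrow> real"
    and y x :: "real \<Rightarrow> 'n \<Rightarrow> 'a \<Rightarrow> real"
    and k :: 'n and p p' :: "'a \<Rightarrow> real"
  assumes game: "finite_game N A"
    and pen: "\<forall>l\<in>N. penalty A l (h l)"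
    and xQ: "\<forall>t\<ge>0. \<forall>l\<in>N. x t l = choice A h l (y t l)"
    and ode: "\<forall>t\<ge>0. \<forall>l\<in>N. \<forall>\<alpha>\<in>A l.
               ((\<lambda>s. y s l \<alpha>) has_real_derivative payoff_vec N A U l (x t) \<alpha>) (at t within {0..})"
    and k: "k \<in> N"
    and p: "p \<in> mixed A k" and p': "p' \<in> mixed A k"
    and dom: "weakly_dominated N A U k p p'"
  shows "((\<lambda>t. Min {x t k \<alpha> | \<alpha>. \<alpha> \<in> A k \<and> p \<alpha> \<noteq> 0}) \<longlongrightarrow> 0) at_top
         \<or> (\<forall>\<alpha>\<in>PiE (N - {k}) A.
              exp_payoff N A U k ((\<lambda>l. pure (\<alpha> l))(k := p))
                < exp_payoff N A U k ((\<lambda>l. pure (\<alpha> l))(k := p'))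
              \<longrightarrow> ((\<lambda>t. \<Prod>l\<in>N - {k}. x t l (\<alpha> l)) \<longlongrightarrow> 0) at_top)"
proof -
  have finN: "finite N" and finA: "\<And>l. l \<in> N \<Longrightarrow> finite (A l)" and neA: "\<And>l. l \<in> N \<Longrightarrow> A l \<noteq> {}"
    using game by (auto simp: finite_game_def)
  have ism: "ismax A l (h l) (y t l) (x t l)" if "t \<ge> 0" "l \<in> N" for t l
  proof -
    have "ismax A l (h l) (y t l) (choice A h l (y t l))"
      by (rule choice_spec[of A l h]) (use finA neA pen that in auto)
    then show ?thesis using xQ that by simp
  qed
  have xm: "x t l \<in> mixed A l" if "t \<ge> 0" "l \<in> N" for t l
    using ism[OF that] by (simp add: ismax_def)
  define g where "g \<beta> = (\<Sum>a\<in>A k. (p' a - p a) * U k (\<beta>(k:=a)))" for \<beta>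
  define Pr where "Pr t \<beta> = (\<Prod>l\<in>N-{k}. x t l (\<beta> l))" for t \<beta>
  define D where "D t = (\<Sum>\<beta>\<in>PiE (N-{k}) A. Pr t \<beta> * g \<beta>)" for t
  define V where "V t = (\<Sum>a\<in>A k. (p' a - p a) * y t k a)" for t
  have finPi: "finite (PiE (N-{k}) A)" using finN finA by (intro finite_PiE) auto
  have Dformula: "exp_payoff N A U k (z(k:=p')) - exp_payoff N A U k (z(k:=p))
      = (\<Sum>\<beta>\<in>PiE (N-{k}) A. (\<Prod>l\<in>N-{k}. z l (\<beta> l)) * g \<beta>)" for z
    by (simp add: exp_payoff_decomp[OF k finN] g_def left_diff_distrib right_diff_distrib sum_subtractf sum_distrib_left)
  have Dpure: "exp_payoff N A U k ((\<lambda>l. pure (\<beta> l))(k:=p')) - exp_payoff N A U k ((\<lambda>l. pure (\<beta> l))(k:=p)) = g \<beta>"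
    if "\<beta> \<in> PiE (N-{k}) A" for \<beta>
  proof -
    have "(\<Sum>\<beta>'\<in>PiE (N-{k}) A. (\<Prod>l\<in>N-{k}. pure (\<beta> l) (\<beta>' l)) * g \<beta>')
        = (\<Sum>\<beta>'\<in>PiE (N-{k}) A. if \<beta>' = \<beta> then g \<beta>' else 0)"
      by (rule sum.cong) (use that finN in \<open>auto simp: prod_pure_PiE\<close>)
    also have "\<dots> = g \<beta>" using finPi that by (simp add: sum.delta')
    finally show ?thesis by (simp add: Dformula)
  qed
  have gnn: "0 \<le> g \<beta>" if "\<beta> \<in> PiE (N-{k}) A" for \<beta>
  proof -
    have "\<forall>l\<in>N - {k}. pure (\<beta> l) \<in> mixed A l"
      using that finA by (auto intro!: pure_mixed)
    then have "exp_payoff N A U k ((\<lambda>l. pure (\<beta> l))(k := p)) \<le> exp_payoff N A U k ((\<lambda>l. pure (\<beta> l))(k := p'))"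
      using dom unfolding weakly_dominated_def by (elim conjE, rule_tac mp, erule_tac allE) assumption
    then show ?thesis using Dpure[OF that] by linarith
  qed
  have Prnn: "0 \<le> Pr t \<beta>" if "t \<ge> 0" "\<beta> \<in> PiE (N-{k}) A" for t \<beta>
    unfolding Pr_def
  proof (rule prod_nonneg)
    fix l assume "l \<in> N - {k}"
    then show "0 \<le> x t l (\<beta> l)" using mixed_bounds(1)[OF finA[of l] xm[OF that(1), of l]] by auto
  qed
  have Dlow: "Pr t \<beta> * g \<beta> \<le> D t" if "t \<ge> 0" "\<beta> \<in> PiE (N-{k}) A" for t \<beta>
    unfolding D_def by (rule member_le_sum) (use that finPi Prnn gnn in auto)
  have pv: "payoff_vec N A U k (x t) a = (\<Sum>\<beta>\<in>PiE (N-{k}) A. Pr t \<beta> * U k (\<beta>(k:=a)))"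
    if "a \<in> A k" for t a
  proof -
    have "payoff_vec N A U k (x t) a = (\<Sum>\<beta>\<in>PiE (N-{k}) A. Pr t \<beta> * (\<Sum>b\<in>A k. pure a b * U k (\<beta>(k:=b))))"
      by (simp add: payoff_vec_def exp_payoff_decomp[OF k finN] Pr_def)
    also have "\<dots> = (\<Sum>\<beta>\<in>PiE (N-{k}) A. Pr t \<beta> * U k (\<beta>(k:=a)))"
    proof (rule sum.cong[OF refl])
      fix \<beta>
      have "(\<Sum>b\<in>A k. pure a b * U k (\<beta>(k:=b))) = (\<Sum>b\<in>A k. if a = b then U k (\<beta>(k:=b)) else 0)"
        by (rule sum.cong) (auto simp: pure_def)
      also have "\<dots> = U k (\<beta>(k:=a))" using that finA[OF k] by (simp add: sum.delta')
      finally show "Pr t \<beta> * (\<Sum>b\<in>A k. pure a b * U k (\<beta>(k:=b))) = Pr t \<beta> * U k (\<beta>(k:=a))" by simp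
    qed
    finally show ?thesis .
  qed
  have Vderiv: "(V has_real_derivative D t) (at t within {0..})" if "t \<ge> 0" for t
  proof -
    have "(V has_real_derivative (\<Sum>a\<in>A k. (p' a - p a) * payoff_vec N A U k (x t) a)) (at t within {0..})"
      unfolding V_def
      by (intro DERIV_sum DERIV_cmult) (use ode that k in auto)
    also have "(\<Sum>a\<in>A k. (p' a - p a) * payoff_vec N A U k (x t) a)
        = (\<Sum>a\<in>A k. \<Sum>\<beta>\<in>PiE (N-{k}) A. (p' a - p a) * (Pr t \<beta> * U k (\<beta>(k:=a))))"
      by (rule sum.cong[OF refl]) (simp add: pv sum_distrib_left)
    also have "\<dots> = (\<Sum>\<beta>\<in>PiE (N-{k}) A. \<Sum>a\<in>A k. (p' a - p a) * (Pr t \<beta> * U k (\<beta>(k:=a))))"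
      by (rule sum.swap)
    also have "\<dots> = D t"
      unfolding D_def g_def by (rule sum.cong[OF refl]) (simp add: sum_distrib_left mult_ac)
    finally show ?thesis .
  qed
  have mvt: "\<exists>\<xi>\<in>{s..t}. V t - V s = D \<xi> * (t - s)" if "0 \<le> s" "s \<le> t" for s t
  proof -
    have "\<exists>\<xi>\<in>{s..t}. V t - V s = (*) (D \<xi>) (t - s)"
    proof (rule mvt_very_simple[OF that(2)])
      fix \<xi> assume "s \<le> \<xi>" "\<xi> \<le> t"
      then have "(V has_real_derivative D \<xi>) (at \<xi> within {0..})" using Vderiv that by simp
      then have "(V has_derivative (*) (D \<xi>)) (at \<xi> within {0..})"
        by (simp add: has_field_derivative_imp_has_derivative)
      then show "(V has_derivative (*) (D \<xi>)) (at \<xi> within {s..t})"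
        by (rule has_derivative_subset) (use that in auto)
    qed
    then show ?thesis by simp
  qed
  have Dnn: "0 \<le> D t" if "t \<ge> 0" for t
    unfolding D_def by (rule sum_nonneg) (use that Prnn gnn in auto)
  have Vmono: "V s \<le> V t" if st: "0 \<le> s" "s \<le> t" for s t
  proof -
    obtain \<xi> where "\<xi> \<in> {s..t}" "V t - V s = D \<xi> * (t - s)" using mvt[OF st] by blast
    moreover have "0 \<le> D \<xi>" using Dnn \<open>\<xi> \<in> {s..t}\<close> st by auto
    moreover have "0 \<le> D \<xi> * (t - s)" using \<open>0 \<le> D \<xi>\<close> st by simp
    ultimately show ?thesis by linarith
  qed
  show ?thesis
  proof (cases "\<forall>B. \<exists>t\<ge>0. B < V t")
    case True
    have Vtop: "filterlim V at_top at_top"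
      unfolding filterlim_at_top
    proof
      fix Z
      obtain t0 where t0: "t0 \<ge> 0" "Z < V t0" using True by blast
      show "\<forall>\<^sub>F t in at_top. Z \<le> V t"
        using eventually_ge_at_top[of t0] by eventually_elim (use t0 Vmono in force)
    qed
    have contk: "continuous_on (mixed A k) (h k)" using pen k unfolding penalty_def by blast
    have "bounded (h k ` mixed A k)"
      by (rule compact_imp_bounded[OF compact_continuous_image[OF contk compact_mixed]]) (rule finA[OF k])
    then obtain C where C: "\<forall>z\<in>mixed A k. \<bar>h k z\<bar> \<le> C" unfolding bounded_real by blast
    define SS where "SS = {\<alpha>\<in>A k. p \<alpha> \<noteq> 0}"
    have finSS: "finite SS" using finA[OF k] by (simp add: SS_def)
    have neSS: "SS \<noteq> {}"
    proof
      assume "SS = {}"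
      then have "\<forall>a\<in>A k. p a = 0" by (auto simp: SS_def)
      then have "sum p (A k) = 0" by simp
      then show False using p by (simp add: mixed_def)
    qed
    define m where "m t = Min {x t k \<alpha> | \<alpha>. \<alpha> \<in> A k \<and> p \<alpha> \<noteq> 0}" for t
    have mimg: "{x t k \<alpha> | \<alpha>. \<alpha> \<in> A k \<and> p \<alpha> \<noteq> 0} = (\<lambda>\<alpha>. x t k \<alpha>) ` SS" for t
      by (auto simp: SS_def)
    have mle: "m t \<le> x t k \<alpha>" if "\<alpha> \<in> SS" for t \<alpha>
      unfolding m_def mimg using finSS that by simp
    have mnn: "0 \<le> m t" if "t \<ge> 0" for t
      unfolding m_def mimg using finSS neSS xm[OF that k] finA[OF k]
      by (auto simp: Min_ge_iff intro: mixed_bounds)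
    have mV: "m t * V t \<le> 2 * C" if t: "t \<ge> 0" for t
    proof -
      define x' where "x' a = x t k a + m t * (p' a - p a)" for a
      have pair: "pairing A k (y t k) x' = pairing A k (y t k) (x t k) + m t * V t"
        by (simp add: pairing_def x'_def V_def distrib_left sum.distrib sum_distrib_left mult_ac)
      have xk: "x t k \<in> mixed A k" using xm[OF t k] .
      have x'm: "x' \<in> mixed A k"
        unfolding mixed_def
      proof (intro CollectI conjI allI impI ballI)
        fix a assume "a \<notin> A k" then show "x' a = 0" using xk p p' by (simp add: x'_def mixed_def)
      next
        fix a assume a: "a \<in> A k"
        have p'a: "0 \<le> p' a" using p' a by (simp add: mixed_def)
        have "m t * p a \<le> x t k a"
        proof (cases "p a = 0")
          case True then show ?thesis using xk a by (simp add: mixed_def)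
        next
          case False
          then have "a \<in> SS" using a by (simp add: SS_def)
          have "m t * p a \<le> m t * 1"
            by (rule mult_left_mono) (use mixed_bounds[OF finA[OF k] p] mnn[OF t] in auto)
          then show ?thesis using mle[OF \<open>a \<in> SS\<close>, of t] by linarith
        qed
        moreover have "0 \<le> m t * p' a" using mnn[OF t] p'a by simp
        ultimately show "0 \<le> x' a" by (simp add: x'_def algebra_simps)
      next
        show "sum x' (A k) = 1" using xk p p'
          by (simp add: x'_def sum.distrib sum_distrib_left[symmetric] sum_subtractf mixed_def)
      qed
      have "pairing A k (y t k) x' - h k x' \<le> pairing A k (y t k) (x t k) - h k (x t k)"
        using ism[OF t k] x'm unfolding ismax_def by blast
      then have "m t * V t \<le> h k x' - h k (x t k)" using pair by simp
      also have "\<dots> \<le> 2 * C" using C x'm xk by (smt (verit))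
      finally show ?thesis .
    qed
    have lim: "((\<lambda>t. 2 * C / V t) \<longlongrightarrow> 0) at_top"
      by (rule tendsto_divide_0[OF tendsto_const filterlim_at_top_imp_at_infinity[OF Vtop]])
    have ev: "\<forall>\<^sub>F t in at_top. 0 < V t \<and> t \<ge> 0"
    proof -
      obtain t0 where t0: "t0 \<ge> 0" "0 < V t0" using True by blast
      show ?thesis using eventually_ge_at_top[of t0]
        by eventually_elim (use t0 Vmono in \<open>force\<close>)
    qed
    have "(m \<longlongrightarrow> 0) at_top"
    proof (rule tendsto_sandwich[OF _ _ tendsto_const lim])
      show "\<forall>\<^sub>F t in at_top. 0 \<le> m t" using ev by eventually_elim (use mnn in auto)
      show "\<forall>\<^sub>F t in at_top. m t \<le> 2 * C / V t" using ev
        by eventually_elim (use mV in \<open>auto simp: pos_le_divide_eq\<close>)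
    qed
    then show ?thesis unfolding m_def by blast
  next
    case False
    then obtain B where B: "\<forall>t\<ge>0. V t \<le> B" by (auto simp: not_less)
    define L where "L = Sup (V ` {0..})"
    have bdd: "bdd_above (V ` {0..})" using B by (auto intro!: bdd_aboveI2)
    have VL: "V t \<le> L" if "t \<ge> 0" for t unfolding L_def by (rule cSup_upper) (use that bdd in auto)
    have cauchy: "\<exists>T\<ge>0. \<forall>t\<ge>T. \<forall>s\<ge>t. V s - V t < \<eta>" if eta: "\<eta> > 0" for \<eta>
    proof -
      have "L - \<eta> < Sup (V ` {0..})" using eta by (simp add: L_def)
      then have "\<exists>v\<in>V ` {0..}. L - \<eta> < v" using bdd by (subst (asm) less_cSup_iff) auto
      then obtain t0 where t0: "t0 \<ge> 0" "L - \<eta> < V t0" by auto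
      show ?thesis
      proof (intro exI[of _ t0] conjI allI impI)
        fix t s assume ts: "t0 \<le> t" "t \<le> s"
        have "V t0 \<le> V t" using Vmono t0 ts by auto
        moreover have "V s \<le> L" using VL t0 ts by auto
        ultimately show "V s - V t < \<eta>" using t0 by linarith
      qed (use t0 in auto)
    qed
    define M where "M = (\<Sum>l\<in>N. \<Sum>\<gamma>\<in>PiE N A. \<bar>U l \<gamma>\<bar>)"
    have M0: "M \<ge> 0" unfolding M_def by (intro sum_nonneg) auto
    have Mb: "\<bar>payoff_vec N A U l (x t) a\<bar> \<le> M" if tla: "t \<ge> 0" "l \<in> N" "a \<in> A l" for t l a
    proof -
      have z: "\<forall>l'\<in>N. ((x t)(l := pure a)) l' \<in> mixed A l'"
        using xm[OF tla(1)] pure_mixed[of A l a] finA tla by auto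
      have "\<bar>payoff_vec N A U l (x t) a\<bar> \<le> (\<Sum>\<gamma>\<in>PiE N A. \<bar>U l \<gamma>\<bar>)"
        unfolding payoff_vec_def by (rule exp_payoff_bound[OF game z])
      also have "\<dots> \<le> M" unfolding M_def
        by (rule member_le_sum[where f="\<lambda>l. \<Sum>\<gamma>\<in>PiE N A. \<bar>U l \<gamma>\<bar>"]) (use tla finN in \<open>auto intro: sum_nonneg\<close>)
      finally show ?thesis .
    qed
    have ylip: "\<bar>y s l a - y t l a\<bar> \<le> M * \<bar>s - t\<bar>" if stla: "s \<ge> 0" "t \<ge> 0" "l \<in> N" "a \<in> A l" for s t l a
    proof -
      have "norm ((\<lambda>s. y s l a) s - (\<lambda>s. y s l a) t) \<le> M * norm (s - t)"
      proof (rule field_differentiable_bound[where S="{0..}" and f'="\<lambda>t. payoff_vec N A U l (x t) a"])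
        show "convex {0::real..}" by (rule convex_real_interval)
        show "((\<lambda>s. y s l a) has_field_derivative payoff_vec N A U l (x z) a) (at z within {0..})"
          if "z \<in> {0..}" for z using ode that stla by auto
        show "norm (payoff_vec N A U l (x z) a) \<le> M" if "z \<in> {0..}" for z using Mb that stla by auto
      qed (use stla in auto)
      then show ?thesis by simp
    qed
    obtain Kf where Kf: "\<forall>l\<in>N. Kf l > 0 \<and> strongly_convex_mixed A l (Kf l) (h l)"
      using pen unfolding penalty_def by metis
    define K0 where "K0 = Min (Kf ` N)"
    have K0: "K0 > 0" unfolding K0_def using finN k Kf by (subst Min_gr_iff) auto
    have scK0: "strongly_convex_mixed A l K0 (h l)" if l: "l \<in> N" for l
    proof (rule sc_mono)
      show "strongly_convex_mixed A l (Kf l) (h l)" using Kf l by blast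
      show "K0 \<le> Kf l" unfolding K0_def using finN l by simp
    qed
    have xhold: "(x s l a - x t l a)\<^sup>2 \<le> 4 * (M * \<bar>s - t\<bar>) / K0"
      if stla: "s \<ge> 0" "t \<ge> 0" "l \<in> N" "a \<in> A l" for s t l a
      by (rule choice_holder[OF scK0[OF stla(3)] K0 finA[OF stla(3)] ism[OF stla(1,3)] ism[OF stla(2,3)]])
         (use ylip stla in auto)
    have unif: "\<exists>\<delta>>0. \<forall>s t. 0 \<le> s \<longrightarrow> 0 \<le> t \<longrightarrow> \<bar>s - t\<bar> \<le> \<delta> \<longrightarrow> \<bar>Pr s \<alpha> - Pr t \<alpha>\<bar> \<le> \<epsilon>"
      if eps: "\<epsilon> > 0" and al: "\<alpha> \<in> PiE (N-{k}) A" for \<epsilon> \<alpha>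
    proof -
      define \<eta> where "\<eta> = \<epsilon> / (real (card N) + 1)"
      have eta: "\<eta> > 0" using eps by (simp add: \<eta>_def)
      define \<delta> where "\<delta> = \<eta>\<^sup>2 * K0 / (4 * (M + 1))"
      have dpos: "\<delta> > 0" using eta K0 M0 by (simp add: \<delta>_def)
      show ?thesis
      proof (intro exI[of _ \<delta>] conjI allI impI dpos)
        fix s t :: real assume st: "0 \<le> s" "0 \<le> t" "\<bar>s - t\<bar> \<le> \<delta>"
        have each: "\<bar>x s l (\<alpha> l) - x t l (\<alpha> l)\<bar> \<le> \<eta>" if l: "l \<in> N - {k}" for l
        proof -
          have all: "\<alpha> l \<in> A l" using al l by (auto simp: PiE_iff)
          have "(x s l (\<alpha> l) - x t l (\<alpha> l))\<^sup>2 \<le> 4 * (M * \<bar>s - t\<bar>) / K0"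
            using xhold st l all by auto
          also have "\<dots> \<le> 4 * ((M + 1) * \<delta>) / K0"
            using st M0 K0 by (intro divide_right_mono mult_left_mono mult_mono) auto
          also have "\<dots> = \<eta>\<^sup>2"
          proof -
            have Mp: "M + 1 \<noteq> 0" using M0 by linarith
            have "(M + 1) * \<delta> = \<eta>\<^sup>2 * K0 / 4" unfolding \<delta>_def using Mp by (simp add: field_simps)
            then have "4 * ((M + 1) * \<delta>) = \<eta>\<^sup>2 * K0" by simp
            then show ?thesis using K0 by (simp add: field_simps)
          qed
          finally have "\<bar>x s l (\<alpha> l) - x t l (\<alpha> l)\<bar>\<^sup>2 \<le> \<eta>\<^sup>2" by simp
          then show ?thesis by (rule power2_le_imp_le) (use eta in linarith)
        qed
        have b1: "norm (x s l (\<alpha> l)) \<le> 1" "norm (x t l (\<alpha> l)) \<le> 1" if l: "l \<in> N - {k}" for l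
          using mixed_bounds[OF finA xm[OF st(1)], of l "\<alpha> l"] mixed_bounds[OF finA xm[OF st(2)], of l "\<alpha> l"] l by auto
        have "\<bar>Pr s \<alpha> - Pr t \<alpha>\<bar> \<le> (\<Sum>l\<in>N-{k}. norm (x s l (\<alpha> l) - x t l (\<alpha> l)))"
          unfolding Pr_def using norm_prod_diff[of "N-{k}" "\<lambda>l. x s l (\<alpha> l)" "\<lambda>l. x t l (\<alpha> l)"] b1 by auto
        also have "\<dots> \<le> real (card (N-{k})) * \<eta>" by (rule sum_bounded_above) (use each in auto)
        also have "\<dots> \<le> (real (card N) + 1) * \<eta>"
        proof (rule mult_right_mono)
          have "card (N - {k}) \<le> card N" using finN by (simp add: card_mono)
          then show "real (card (N - {k})) \<le> real (card N) + 1" by linarith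
        qed (use eta in auto)
        also have "\<dots> = \<epsilon>" by (simp add: \<eta>_def)
        finally show "\<bar>Pr s \<alpha> - Pr t \<alpha>\<bar> \<le> \<epsilon>" .
      qed
    qed
    show ?thesis
    proof (rule disjI2, intro ballI impI)
      fix \<alpha> assume al: "\<alpha> \<in> PiE (N-{k}) A"
        and lt: "exp_payoff N A U k ((\<lambda>l. pure (\<alpha> l))(k := p)) < exp_payoff N A U k ((\<lambda>l. pure (\<alpha> l))(k := p'))"
      have gpos: "0 < g \<alpha>" using Dpure[OF al] lt by linarith
      have "((\<lambda>t. Pr t \<alpha>) \<longlongrightarrow> 0) at_top"
        unfolding tendsto_iff
      proof (intro allI impI)
        fix \<epsilon> :: real assume eps: "\<epsilon> > 0"
        show "\<forall>\<^sub>F t in at_top. dist (Pr t \<alpha>) 0 < \<epsilon>"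
        proof (rule ccontr)
          assume ne: "\<not> (\<forall>\<^sub>F t in at_top. dist (Pr t \<alpha>) 0 < \<epsilon>)"
          obtain \<delta> where dpos: "\<delta> > 0" and dl: "\<forall>s t. 0 \<le> s \<longrightarrow> 0 \<le> t \<longrightarrow> \<bar>s - t\<bar> \<le> \<delta> \<longrightarrow> \<bar>Pr s \<alpha> - Pr t \<alpha>\<bar> \<le> \<epsilon>/2"
            using unif[of "\<epsilon>/2" \<alpha>] eps al by auto
          have etapos: "g \<alpha> * (\<epsilon>/2) * \<delta> > 0" using gpos eps dpos by simp
          obtain T where T: "T \<ge> 0" "\<forall>t\<ge>T. \<forall>s\<ge>t. V s - V t < g \<alpha> * (\<epsilon>/2) * \<delta>"
            using cauchy[OF etapos] by blast
          obtain t where t: "t \<ge> T" "\<not> dist (Pr t \<alpha>) 0 < \<epsilon>"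
            using ne unfolding eventually_at_top_linorder by blast
          have t0: "t \<ge> 0" using t T by linarith
          have Prt: "Pr t \<alpha> \<ge> \<epsilon>" using t Prnn[OF t0 al] by (simp add: dist_real_def)
          obtain \<xi> where xi: "\<xi> \<in> {t..t+\<delta>}" "V (t+\<delta>) - V t = D \<xi> * (t + \<delta> - t)"
            using mvt[of t "t+\<delta>"] t0 dpos by auto
          have xi0: "\<xi> \<ge> 0" using xi t0 by auto
          have "\<bar>Pr \<xi> \<alpha> - Pr t \<alpha>\<bar> \<le> \<epsilon>/2" using dl xi0 t0 xi(1) by auto
          then have Prxi: "\<epsilon>/2 \<le> Pr \<xi> \<alpha>" using Prt by linarith
          have "\<epsilon>/2 * g \<alpha> \<le> Pr \<xi> \<alpha> * g \<alpha>" by (rule mult_right_mono[OF Prxi]) (use gpos in auto)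
          also have "\<dots> \<le> D \<xi>" by (rule Dlow[OF xi0 al])
          finally have "\<epsilon>/2 * g \<alpha> * \<delta> \<le> D \<xi> * \<delta>" by (rule mult_right_mono) (use dpos in auto)
          then have "g \<alpha> * (\<epsilon>/2) * \<delta> \<le> V (t+\<delta>) - V t" using xi(2) by (simp add: mult_ac)
          moreover have "V (t+\<delta>) - V t < g \<alpha> * (\<epsilon>/2) * \<delta>" using T t dpos by auto
          ultimately show False by linarith
        qed
      qed
      then show "((\<lambda>t. \<Prod>l\<in>N - {k}. x t l (\<alpha> l)) \<longlongrightarrow> 0) at_top" unfolding Pr_def .
    qed
  qed
qed

end
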